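(* For every integer $l\ge 3$ there is no Neumaier graph with parameters $(6l+3,\,4l+2,\,3l;\,l+1,\,2l+1)$.
   Context: All graphs are finite, simple, undirected. A regular graph is $\lambda$-edge-regular if it has at least one edge and any two adjacent vertices have exactly $\lambda$ common neighbours. An edge-regular graph with parameters $(v,k,\lambda)$ has $v$ vertices, is $k$-regular and $\lambda$-edge-regular. For a regular graph, a clique $S$ is $e$-regular ($e>0$) if every vertex outside $S$ has exactly $e$ neighbours in $S$. A Neumaier graph with parameters $(v,k,\lambda;e,s)$ is a non-complete edge-regular graph with parameters $(v,k,\lambda)$ containing an $e$-regular clique of size $s$. *)

theory Defs
  imports Main
begin

definition simple_graph :: "'a set \<Rightarrow> ('a \<Rightarrow> 'a \<Rightarrow> bool) \<Rightarrow> bool" where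
  "simple_graph V E \<longleftrightarrow> finite V \<and> (\<forall>x y. E x y \<longrightarrow> x \<in> V \<and> y \<in> V)
     \<and> (\<forall>x y. E x y \<longrightarrow> E y x) \<and> (\<forall>x. \<not> E x x)"

definition nbhd :: "'a set \<Rightarrow> ('a \<Rightarrow> 'a \<Rightarrow> bool) \<Rightarrow> 'a \<Rightarrow> 'a set" where
  "nbhd V E x = {y \<in> V. E x y}"

definition regular :: "'a set \<Rightarrow> ('a \<Rightarrow> 'a \<Rightarrow> bool) \<Rightarrow> nat \<Rightarrow> bool" where
  "regular V E k \<longleftrightarrow> (\<forall>x\<in>V. card (nbhd V E x) = k)"

definition edge_regular :: "'a set \<Rightarrow> ('a \<Rightarrow> 'a \<Rightarrow> bool) \<Rightarrow> nat \<Rightarrow> nat \<Rightarrow> nat \<Rightarrow> bool" where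
  "edge_regular V E v k lam \<longleftrightarrow> simple_graph V E \<and> card V = v \<and> regular V E k
     \<and> (\<exists>x y. E x y)
     \<and> (\<forall>x y. E x y \<longrightarrow> card (nbhd V E x \<inter> nbhd V E y) = lam)"

definition is_clique :: "'a set \<Rightarrow> ('a \<Rightarrow> 'a \<Rightarrow> bool) \<Rightarrow> 'a set \<Rightarrow> bool" where
  "is_clique V E S \<longleftrightarrow> S \<subseteq> V \<and> (\<forall>x\<in>S. \<forall>y\<in>S. x \<noteq> y \<longrightarrow> E x y)"

definition regular_clique :: "'a set \<Rightarrow> ('a \<Rightarrow> 'a \<Rightarrow> bool) \<Rightarrow> nat \<Rightarrow> 'a set \<Rightarrow> bool" where
  "regular_clique V E e S \<longleftrightarrow> e > 0 \<and> is_clique V E S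
     \<and> (\<forall>x\<in>V - S. card (nbhd V E x \<inter> S) = e)"

definition complete_graph :: "'a set \<Rightarrow> ('a \<Rightarrow> 'a \<Rightarrow> bool) \<Rightarrow> bool" where
  "complete_graph V E \<longleftrightarrow> (\<forall>x\<in>V. \<forall>y\<in>V. x \<noteq> y \<longrightarrow> E x y)"

definition neumaier :: "'a set \<Rightarrow> ('a \<Rightarrow> 'a \<Rightarrow> bool) \<Rightarrow> nat \<Rightarrow> nat \<Rightarrow> nat \<Rightarrow> nat \<Rightarrow> nat \<Rightarrow> bool" where
  "neumaier V E v k lam e s \<longleftrightarrow> edge_regular V E v k lam \<and> \<not> complete_graph V E
     \<and> (\<exists>S. regular_clique V E e S \<and> card S = s)"

end

theory Submission
  imports Defs
begin

theorem mainTheorem3: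
  fixes l :: nat and V :: "'a set" and E :: "'a \<Rightarrow> 'a \<Rightarrow> bool"
  assumes "l \<ge> 3"
  shows "\<not> neumaier V E (6*l+3) (4*l+2) (3*l) (l+1) (2*l+1)"
proof
  assume "neumaier V E (6*l+3) (4*l+2) (3*l) (l+1) (2*l+1)"
  then have sg: "simple_graph V E" and cV: "card V = 6*l+3" and reg: "regular V E (4*l+2)"
    and lam: "\<And>x y. E x y \<Longrightarrow> card (nbhd V E x \<inter> nbhd V E y) = 3*l"
    and "\<exists>S. regular_clique V E (l+1) S \<and> card S = 2*l+1"
    unfolding neumaier_def edge_regular_def by auto
  then obtain S where rc: "regular_clique V E (l+1) S" and cS: "card S = 2*l+1" by auto
  have fin: "finite V" and inV: "\<And>x y. E x y \<Longrightarrow> x \<in> V \<and> y \<in> V"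
    and sym: "\<And>x y. E x y \<Longrightarrow> E y x" and irr: "\<And>x. \<not> E x x"
    using sg unfolding simple_graph_def by auto
  have SV: "S \<subseteq> V" and cl: "\<And>x y. x\<in>S \<Longrightarrow> y\<in>S \<Longrightarrow> x\<noteq>y \<Longrightarrow> E x y"
    and Bc: "\<And>x. x \<in> V - S \<Longrightarrow> card (nbhd V E x \<inter> S) = l+1"
    using rc unfolding regular_clique_def is_clique_def by auto
  define T where "T = V - S"
  define B where "B = (\<lambda>q. nbhd V E q \<inter> S)"
  define Q where "Q = (\<lambda>y. {q \<in> T. q \<noteq> y \<and> \<not> E y q})"
  have finS: "finite S" using SV fin finite_subset by auto
  have finT: "finite T" using fin T_def by auto
  have cT: "card T = 4*l+2" using card_Diff_subset[OF finS SV] cV cS T_def by simp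
  have deg: "\<And>x. x \<in> V \<Longrightarrow> card (nbhd V E x) = 4*l+2" using reg unfolding regular_def by blast
  have nbV: "nbhd V E x \<subseteq> V" for x by (auto simp: nbhd_def)
  have finN: "finite (nbhd V E x)" for x using nbV fin finite_subset by blast
  have cB: "y \<in> T \<Longrightarrow> card (B y) = l+1" for y using Bc T_def B_def by simp
  have BS: "B y \<subseteq> S" for y by (auto simp: B_def)
  have finB: "finite (B y)" for y using BS finS finite_subset by blast
  have cNT: "card (nbhd V E y \<inter> T) = 3*l+1" if yT: "y \<in> T" for y
  proof -
    have eq: "nbhd V E y = B y \<union> (nbhd V E y \<inter> T)" using nbV T_def B_def by auto
    have "card (nbhd V E y) = card (B y \<union> (nbhd V E y \<inter> T))"
      using eq by (rule arg_cong)
    also have "\<dots> = card (B y) + card (nbhd V E y \<inter> T)"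
      by (rule card_Un_disjoint) (use finN finB T_def B_def in auto)
    finally have "card (nbhd V E y) = card (B y) + card (nbhd V E y \<inter> T)" .
    then show ?thesis using deg yT T_def cB by simp
  qed
  have cQ: "card (Q y) = l" if yT: "y \<in> T" for y
  proof -
    have e1: "Q y = T - insert y (nbhd V E y \<inter> T)" unfolding Q_def nbhd_def T_def by auto
    have "y \<notin> nbhd V E y" using irr by (simp add: nbhd_def)
    then have e2: "card (insert y (nbhd V E y \<inter> T)) = 3*l+2" using cNT yT finN by simp
    have e3: "insert y (nbhd V E y \<inter> T) \<subseteq> T" using yT by auto
    have "card (Q y) = card T - card (insert y (nbhd V E y \<inter> T))"
      using e1 card_Diff_subset[OF finite_subset[OF e3 finT] e3] by simp
    then show ?thesis using e2 cT by simp
  qed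
  have cA: "card (nbhd V E x \<inter> T) = 2*l+2" if xS: "x \<in> S" for x
  proof -
    have eq: "nbhd V E x = (S - {x}) \<union> (nbhd V E x \<inter> T)"
      using nbV T_def xS cl SV irr unfolding nbhd_def by blast
    have "card (nbhd V E x) = card ((S - {x}) \<union> (nbhd V E x \<inter> T))"
      using eq by (rule arg_cong)
    also have "\<dots> = card (S - {x}) + card (nbhd V E x \<inter> T)"
      by (rule card_Un_disjoint) (use finN finS T_def in auto)
    finally have "card (nbhd V E x) = card (S - {x}) + card (nbhd V E x \<inter> T)" .
    then show ?thesis using deg xS SV cS by auto
  qed
  have inter1: "card (B q \<inter> B y) \<ge> 1" if "q \<in> T" "y \<in> T" for q y
  proof -
    have "card (B q \<union> B y) \<le> 2*l+1" using card_mono[OF finS] BS cS by (metis Un_least)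
    moreover have "card (B q \<union> B y) + card (B q \<inter> B y) = card (B q) + card (B y)"
      using card_Un_Int finB by metis
    ultimately show ?thesis using cB that by simp
  qed
  have key: "card {q \<in> Q y. E x q} = 1" if xB: "x \<in> B y" and yT: "y \<in> T" for x y
  proof -
    have xS: "x \<in> S" and Eyx: "E y x" using xB unfolding B_def nbhd_def by auto
    have Exy: "E x y" using sym Eyx by blast
    have "nbhd V E x \<inter> nbhd V E y = (B y - {x}) \<union> (nbhd V E x \<inter> nbhd V E y \<inter> T)"
      using T_def B_def xS cl irr sym unfolding nbhd_def by blast
    then have "card (nbhd V E x \<inter> nbhd V E y) = card ((B y - {x}) \<union> (nbhd V E x \<inter> nbhd V E y \<inter> T))"
      by (rule arg_cong)
    also have "\<dots> = card (B y - {x}) + card (nbhd V E x \<inter> nbhd V E y \<inter> T)"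
      by (rule card_Un_disjoint) (use finN finB T_def B_def in auto)
    finally have "card (nbhd V E x \<inter> nbhd V E y) = card (B y - {x}) + card (nbhd V E x \<inter> nbhd V E y \<inter> T)" .
    then have c2: "card (nbhd V E x \<inter> nbhd V E y \<inter> T) = 2*l"
      using lam[OF Exy] cB[OF yT] xB finB by simp
    have "y \<notin> nbhd V E y" using irr by (simp add: nbhd_def)
    then have c3: "card (insert y (nbhd V E x \<inter> nbhd V E y \<inter> T)) = 2*l+1" using c2 finN by simp
    have sub: "insert y (nbhd V E x \<inter> nbhd V E y \<inter> T) \<subseteq> nbhd V E x \<inter> T"
      using yT Exy inV unfolding nbhd_def by auto
    have e: "{q \<in> Q y. E x q} = (nbhd V E x \<inter> T) - insert y (nbhd V E x \<inter> nbhd V E y \<inter> T)"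
      unfolding Q_def nbhd_def T_def using inV by auto
    show ?thesis using e card_Diff_subset[OF finite_subset[OF sub] sub] finN c3 cA[OF xS] by simp
  qed
  have finQ: "finite (Q y)" for y using finT Q_def by auto
  have sumQ: "(\<Sum>q\<in>Q y. card (B q \<inter> B y)) = l+1" if yT: "y \<in> T" for y
  proof -
    have "card (B q \<inter> B y) = (\<Sum>x\<in>B y. if E x q then 1 else 0)" for q
    proof -
      have "B q \<inter> B y = {x \<in> B y. E x q}" unfolding B_def nbhd_def using sym by auto
      then have "card (B q \<inter> B y) = (\<Sum>x\<in>{x \<in> B y. E x q}. 1)" by simp
      also have "\<dots> = (\<Sum>x\<in>B y. if E x q then 1 else 0)" by (rule sum.inter_filter[OF finB])
      finally show ?thesis .
    qed
    then have "(\<Sum>q\<in>Q y. card (B q \<inter> B y)) = (\<Sum>q\<in>Q y. \<Sum>x\<in>B y. if E x q then 1 else 0)" by simp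
    also have "\<dots> = (\<Sum>x\<in>B y. \<Sum>q\<in>Q y. if E x q then 1 else 0)" by (rule sum.swap)
    also have "\<dots> = (\<Sum>x\<in>B y. card {q \<in> Q y. E x q})"
    proof (rule sum.cong)
      fix x assume "x \<in> B y"
      have "card {q \<in> Q y. E x q} = (\<Sum>q\<in>{q \<in> Q y. E x q}. 1)" by simp
      also have "\<dots> = (\<Sum>q\<in>Q y. if E x q then 1 else 0)" by (rule sum.inter_filter[OF finQ])
      finally show "(\<Sum>q\<in>Q y. if E x q then 1 else 0) = card {q \<in> Q y. E x q}" by simp
    qed simp
    also have "\<dots> = (\<Sum>x\<in>B y. 1)" using key yT by simp
    finally show ?thesis using cB yT by simp
  qed
  have two: "card (B a \<inter> B y) + card (B b \<inter> B y) \<le> 3"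
    if yT: "y \<in> T" and aQ: "a \<in> Q y" and bQ: "b \<in> Q y" and ab: "a \<noteq> b" for y a b
  proof -
    let ?f = "\<lambda>q. card (B q \<inter> B y)"
    have bQ': "b \<in> Q y - {a}" using bQ ab by simp
    have "sum ?f (Q y) = ?f a + (?f b + sum ?f (Q y - {a} - {b}))"
      using sum.remove[OF finQ aQ] sum.remove[OF _ bQ'] finQ by (metis finite_Diff)
    moreover have "(\<Sum>q\<in>Q y - {a} - {b}. (1::nat)) \<le> sum ?f (Q y - {a} - {b})"
      by (rule sum_mono) (use inter1 yT Q_def in auto)
    moreover have "card (Q y - {a} - {b}) = l - 2" using cQ[OF yT] aQ bQ' finQ by simp
    ultimately show ?thesis using sumQ[OF yT] assms by simp
  qed
  have "T \<noteq> {}" using cT by auto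
  then obtain y where yT: "y \<in> T" by auto
  define F where "F = {q \<in> Q y. card (B q \<inter> B y) = 1}"
  have "card (Q y - F) \<le> Suc 0"
  proof (subst card_le_Suc0_iff_eq)
    show "finite (Q y - F)" using finQ by simp
    show "\<forall>a1\<in>Q y - F. \<forall>a2\<in>Q y - F. a1 = a2"
    proof (intro ballI, rule ccontr)
      fix a b assume a: "a \<in> Q y - F" and b: "b \<in> Q y - F" and ab: "a \<noteq> b"
      have "a \<in> T" "b \<in> T" "card (B a \<inter> B y) \<noteq> 1" "card (B b \<inter> B y) \<noteq> 1"
        using a b F_def Q_def by auto
      then have "card (B a \<inter> B y) \<ge> 2" "card (B b \<inter> B y) \<ge> 2"
        using inter1[of a y] inter1[of b y] yT by linarith+
      then show False using two[OF yT _ _ ab] a b by simp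
    qed
  qed
  moreover have "card (Q y) = card F + card (Q y - F)"
    using finQ F_def card_Diff_subset[of F "Q y"] card_mono[of "Q y" F]
    by (metis (no_types, lifting) add_diff_inverse_nat mem_Collect_eq not_less subsetI finite_subset)
  ultimately have "card F \<ge> 2" using cQ[OF yT] assms by simp
  then obtain q1 where q1: "q1 \<in> F" by fastforce
  have "card (F - {q1}) \<ge> 1" using \<open>card F \<ge> 2\<close> q1 finQ F_def by simp
  then have "F - {q1} \<noteq> {}" by (metis card.empty not_one_le_zero)
  then obtain q2 where q2: "q2 \<in> F - {q1}" by blast
  have q1T: "q1 \<in> T" and q2T: "q2 \<in> T" and q12: "q1 \<noteq> q2"
    and nE1: "\<not> E y q1" and nE2: "\<not> E y q2"
    using q1 q2 F_def Q_def by auto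
  have f1: "card (B q1 \<inter> B y) = 1" and f2: "card (B q2 \<inter> B y) = 1" using q1 q2 F_def by auto
  have cover: "S - B y \<subseteq> B q" if qT: "q \<in> T" and fq: "card (B q \<inter> B y) = 1" for q
  proof -
    have "card (B q \<union> B y) + card (B q \<inter> B y) = card (B q) + card (B y)"
      using card_Un_Int finB by metis
    then have "card (B q \<union> B y) = card S" using cB qT yT fq cS by simp
    moreover have "B q \<union> B y \<subseteq> S" using BS by auto
    ultimately have "B q \<union> B y = S" using card_subset_eq finS by metis
    then show ?thesis by auto
  qed
  have "S - B y \<subseteq> B q1 \<inter> B q2" using cover[OF q1T f1] cover[OF q2T f2] by auto
  moreover have "card (S - B y) = l" using card_Diff_subset[OF finB BS] cS cB[OF yT] by simp
  ultimately have big: "card (B q1 \<inter> B q2) \<ge> l" using card_mono finB by (metis finite_Int)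
  show False
  proof (cases "E q1 q2")
    case True
    let ?N1 = "nbhd V E q1 \<inter> T" and ?N2 = "nbhd V E q2 \<inter> T"
    have "?N1 \<union> ?N2 \<subseteq> T - {y}" using nE1 nE2 sym unfolding nbhd_def by blast
    then have "card (?N1 \<union> ?N2) \<le> 4*l+1" using card_mono[of "T - {y}"] finT cT yT by fastforce
    moreover have "card (?N1 \<union> ?N2) + card (?N1 \<inter> ?N2) = card ?N1 + card ?N2"
      using card_Un_Int finN by (metis finite_Int)
    ultimately have c12: "card (?N1 \<inter> ?N2) \<ge> 2*l+1" using cNT q1T q2T by simp
    have "nbhd V E q1 \<inter> nbhd V E q2 = (B q1 \<inter> B q2) \<union> (?N1 \<inter> ?N2)"
      using T_def B_def nbV by auto
    then have "card (nbhd V E q1 \<inter> nbhd V E q2) = card ((B q1 \<inter> B q2) \<union> (?N1 \<inter> ?N2))"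
      by (rule arg_cong)
    also have "\<dots> = card (B q1 \<inter> B q2) + card (?N1 \<inter> ?N2)"
      by (rule card_Un_disjoint) (use finN finB T_def B_def in auto)
    finally have "card (nbhd V E q1 \<inter> nbhd V E q2) = card (B q1 \<inter> B q2) + card (?N1 \<inter> ?N2)" .
    then show False using lam[OF True] c12 big by simp
  next
    case False
    have "y \<noteq> q1" using q1 F_def Q_def by auto
    then have "y \<in> Q q1" using Q_def yT nE1 sym q1T by auto
    moreover have "q2 \<in> Q q1" using Q_def q2T q12 False by auto
    moreover have "y \<noteq> q2" using q2 F_def Q_def by auto
    ultimately have "card (B y \<inter> B q1) + card (B q2 \<inter> B q1) \<le> 3" using two q1T by blast
    moreover have "card (B y \<inter> B q1) \<ge> 1" using inter1 yT q1T by blast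
    moreover have "B q2 \<inter> B q1 = B q1 \<inter> B q2" by auto
    ultimately show False using big assms by simp
  qed
qed

end
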